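(* Let $\nu:\mathcal{C}\to\mathbb{Z}$ and $\psi:\mathcal{C}\to\mathbb{R}$ be additive functions (group homomorphisms). If $\nu(\mathcal{K})=1$, then for all $\mathcal{K}'\in[\mathcal{K}]$, $\psi(\mathcal{K}')=\nu(\mathcal{K}')\,\psi(\mathcal{K})$.
   Context: $\mathcal{C}$ is the smooth knot concordance group. Let $\mathcal{C}^\circ=\mathcal{C}\setminus\{0\}$; $\mathcal{K}\sim'\mathcal{J}$ if there exist $\mathcal{M}\in\mathcal{C}$ and $r,s\in\mathbb{Z}$ with $\mathcal{K}=r\mathcal{M}$, $\mathcal{J}=s\mathcal{M}$; $\sim$ is the equivalence relation generated by $\sim'$; $[\mathcal{K}]$ denotes the $\sim$-class of $\mathcal{K}$ in $\mathbb{P}(\mathcal{C})=\mathcal{C}^\circ/\sim$. *)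

theory Defs
  imports Complex_Main
begin

text \<open>The smooth knot concordance group is not available in Isabelle/HOL; it is modelled
  by an arbitrary abelian group, i.e. a type of class ab_group_add.\<close>

definition zsmult :: "int \<Rightarrow> 'a::ab_group_add \<Rightarrow> 'a" where
  "zsmult r x = (if 0 \<le> r then (\<Sum>i<nat r. x) else - (\<Sum>i<nat (- r). x))"

definition pre_sim :: "'a::ab_group_add \<Rightarrow> 'a \<Rightarrow> bool" where
  "pre_sim K J \<longleftrightarrow> (\<exists>M r s. K = zsmult r M \<and> J = zsmult s M)"

definition pre_sim_nz :: "'a::ab_group_add \<Rightarrow> 'a \<Rightarrow> bool" where
  "pre_sim_nz K J \<longleftrightarrow> K \<noteq> 0 \<and> J \<noteq> 0 \<and> pre_sim K J"

definition proj_sim :: "'a::ab_group_add \<Rightarrow> 'a \<Rightarrow> bool" where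
  "proj_sim = (\<lambda>K J. pre_sim_nz K J \<or> pre_sim_nz J K)\<^sup>*\<^sup>*"

definition proj_class :: "'a::ab_group_add \<Rightarrow> 'a set" where
  "proj_class K = {J. J \<noteq> 0 \<and> proj_sim K J}"

end

theory Submission
  imports Defs
begin

lemma hom_zsmult:
  fixes f :: "'c::ab_group_add \<Rightarrow> 'b::comm_ring_1"
  assumes add: "\<And>a b. f (a + b) = f a + f b"
  shows "f (zsmult r x) = of_int r * f x"
proof -
  have f0: "f 0 = 0" using add[of 0 0] by simp
  have fneg: "f (- y) = - f y" for y using add[of y "-y"] f0 by (simp add: eq_neg_iff_add_eq_0 add.commute)
  have fsum: "f (\<Sum>i<n. x) = of_nat n * f x" for n
    by (induction n) (simp_all add: f0 add algebra_simps)
  show ?thesis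
  proof (cases "0 \<le> r")
    case True
    then show ?thesis by (simp add: zsmult_def fsum)
  next
    case False
    then have "of_int r = - (of_nat (nat (- r)) :: 'b)" by simp
    with False show ?thesis by (simp add: zsmult_def fsum fneg)
  qed
qed

theorem theorem7p1:
  fixes \<nu> :: "'c::ab_group_add \<Rightarrow> int" and \<psi> :: "'c \<Rightarrow> real" and K :: 'c
  assumes nu_add: "\<And>a b. \<nu> (a + b) = \<nu> a + \<nu> b"
    and psi_add: "\<And>a b. \<psi> (a + b) = \<psi> a + \<psi> b"
    and nuK: "\<nu> K = 1"
  shows "\<forall>K' \<in> proj_class K. \<psi> K' = of_int (\<nu> K') * \<psi> K"
proof
  have nu: "\<nu> (zsmult r x) = r * \<nu> x" for r x using hom_zsmult[of \<nu>, OF nu_add] by simp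
  have psi: "\<psi> (zsmult r x) = of_int r * \<psi> x" for r x using hom_zsmult[of \<psi>, OF psi_add] by simp
  have z0: "zsmult 0 x = 0" for x :: 'c by (simp add: zsmult_def)
  have key: "\<psi> J' = of_int (\<nu> J') * \<psi> K"
    if J: "\<psi> J = of_int (\<nu> J) * \<psi> K" and J0: "J \<noteq> 0" and ps: "pre_sim J J' \<or> pre_sim J' J" for J J'
  proof -
    obtain M r s where e: "J = zsmult r M" "J' = zsmult s M"
      using ps unfolding pre_sim_def by blast
    have r0: "r \<noteq> 0" using J0 e z0 by auto
    have "of_int r * \<psi> M = of_int r * (of_int (\<nu> M) * \<psi> K)"
      using J unfolding e psi nu by simp
    then have "\<psi> M = of_int (\<nu> M) * \<psi> K" using r0 by simp
    then show ?thesis unfolding e psi nu by simp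
  qed
  fix K' assume "K' \<in> proj_class K"
  then have "proj_sim K K'" by (simp add: proj_class_def)
  then show "\<psi> K' = of_int (\<nu> K') * \<psi> K"
    unfolding proj_sim_def
  proof (induction rule: rtranclp_induct)
    case base
    then show ?case using nuK by simp
  next
    case (step y z)
    then show ?case using key[of y z] unfolding pre_sim_nz_def by blast
  qed
qed

end
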